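(* For every $w\in\mathbb{C}$, $$\tau|_{L_w\cap\Omega}\le\hat\omega|_{L_w\cap\Omega}\le 2e^{-\rho_1}\,\tau|_{L_w\cap\Omega},$$ as inequalities of real $(1,1)$-forms on the surface $L_w\cap\Omega$ (away from the zero section, where $e^{-\rho_1}=\infty$).
   Context: Let $E$ be the total space of $\mathcal{O}_{\mathbb{P}^1}(-1)\oplus\mathcal{O}_{\mathbb{P}^1}(-1)\to\mathbb{P}^1$, with zero section $P_0$. On the chart with inhomogeneous coordinate $z$ on $\mathbb{P}^1$ use standard fibre coordinates $(\xi_1,\xi_2)$, and define the (globally defined) functions $e^{\rho}=(1+|z|^2)(|\xi_1|^2+|\xi_2|^2)$ and $e^{\rho_1}=(1+|z|^2)|\xi_1|^2$ (the squared norms of $\xi$ and its first component for the metric $h\oplus h$, $h$ the hermitian metric on $\mathcal{O}(-1)$ with curvature $-\omega_{FS}$). Let $\omega_{FS}=\sqrt{-1}\partial\bar\partial\log(1+|z|^2)$ (pulled back to $E$), $\hat\omega=\omega_{FS}+\sqrt{-1}\partial\bar\partial e^{\rho}$ (a Kähler form on $E$), $\tau=\sqrt{-1}\partial\bar\partial e^{\rho_1}$ (a smooth closed nonnegative $(1,1)$-form), and $\Omega=\{\rho<0\}\subset E$. For $w\in\mathbb{C}$, $L_w\subset E$ is the closure of $\{\xi_2=w\xi_1\}$, a smooth surface containing $P_0$ (isomorphic to $\mathbb{C}^2$ blown up at one point). *)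

theory Defs
  imports "HOL-Analysis.Analysis"
begin

text \<open>Chart of E = O(-1)+O(-1) over the affine chart of P^1 with inhomogeneous
coordinate z and fibre coordinates (xi1, xi2).  A point is (z, xi1, xi2).\<close>

definition e_rho :: "complex \<Rightarrow> complex \<Rightarrow> complex \<Rightarrow> real" where
  "e_rho z x1 x2 = (1 + (cmod z)\<^sup>2) * ((cmod x1)\<^sup>2 + (cmod x2)\<^sup>2)"

definition e_rho1 :: "complex \<Rightarrow> complex \<Rightarrow> complex \<Rightarrow> real" where
  "e_rho1 z x1 x2 = (1 + (cmod z)\<^sup>2) * (cmod x1)\<^sup>2"

text \<open>Kaehler potential of omega_FS (pulled back to E).\<close>
definition phi_FS :: "complex \<Rightarrow> complex \<Rightarrow> complex \<Rightarrow> real" where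
  "phi_FS z x1 x2 = ln (1 + (cmod z)\<^sup>2)"

text \<open>Omega = {rho < 0} = {e^rho < 1}.\<close>
definition in_Omega :: "complex \<Rightarrow> complex \<Rightarrow> complex \<Rightarrow> bool" where
  "in_Omega z x1 x2 \<longleftrightarrow> e_rho z x1 x2 < 1"

text \<open>Holomorphic parametrisation (z, t) of L_w = {xi2 = w xi1} in this chart.\<close>
definition L_param :: "complex \<Rightarrow> complex \<Rightarrow> complex \<Rightarrow> complex \<times> complex \<times> complex" where
  "L_param w z t = (z, t, w * t)"

text \<open>Levi form (complex Hessian) of a real function f of two complex variables at
(z,t) evaluated on the tangent vector (a,b):
  sum_{j,k} f_{j kbar} v_j conj(v_k) = (1/4) * Laplacian of f along the complex line
through (z,t) in direction (a,b).  The real (1,1)-form i ddbar f is positive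
semidefinite at a point iff this is nonnegative for all (a,b).\<close>
definition levi :: "(complex \<Rightarrow> complex \<Rightarrow> real) \<Rightarrow> complex \<Rightarrow> complex \<Rightarrow> complex \<Rightarrow> complex \<Rightarrow> real" where
  "levi f z t a b =
     (deriv (deriv (\<lambda>s::real. f (z + of_real s * a) (t + of_real s * b))) 0
    + deriv (deriv (\<lambda>s::real. f (z + of_real s * \<i> * a) (t + of_real s * \<i> * b))) 0) / 4"

text \<open>Potentials of omega_hat = omega_FS + i ddbar e^rho and tau = i ddbar e^rho1,
restricted (pulled back) to L_w via the holomorphic parametrisation.\<close>
definition omega_hat_pot_L :: "complex \<Rightarrow> complex \<Rightarrow> complex \<Rightarrow> real" where
  "omega_hat_pot_L w z t =
     (case L_param w z t of (z', x1, x2) \<Rightarrow> phi_FS z' x1 x2 + e_rho z' x1 x2)"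

definition tau_pot_L :: "complex \<Rightarrow> complex \<Rightarrow> complex \<Rightarrow> real" where
  "tau_pot_L w z t = (case L_param w z t of (z', x1, x2) \<Rightarrow> e_rho1 z' x1 x2)"

end

theory Submission imports Defs begin

lemma d2_gen:
  fixes K pa pb pc A B C D E :: real
  assumes q: "\<And>s::real. 1 + pa + pb * s + pc * s^2 > 0"
  shows "deriv (deriv (\<lambda>s. K*ln(1+pa+pb* s+pc* s^2) + (A+B* s+C* s^2+D* s^3+E* s^4))) 0
       = K*((2*pc*(1+pa) - pb^2)/(1+pa)^2) + 2*C"
proof -
  have d1: "deriv (\<lambda>s. K*ln(1+pa+pb* s+pc* s^2) + (A+B* s+C* s^2+D* s^3+E* s^4))
      = (\<lambda>s. K*((pb+2*pc* s)/(1+pa+pb* s+pc* s^2)) + (B+2*C* s+3*D* s^2+4*E* s^3))"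
  proof
    fix s :: real
    have "((\<lambda>s. K*ln(1+pa+pb* s+pc* s^2) + (A+B* s+C* s^2+D* s^3+E* s^4)) has_real_derivative
       K*((pb+2*pc* s)/(1+pa+pb* s+pc* s^2)) + (B+2*C* s+3*D* s^2+4*E* s^3)) (at s)"
      using q[of s] by (auto intro!: derivative_eq_intros simp: field_simps power2_eq_square power3_eq_cube)
    then show "deriv (\<lambda>s. K*ln(1+pa+pb* s+pc* s^2) + (A+B* s+C* s^2+D* s^3+E* s^4)) s = 
       K*((pb+2*pc* s)/(1+pa+pb* s+pc* s^2)) + (B+2*C* s+3*D* s^2+4*E* s^3)"
      by (rule DERIV_imp_deriv)
  qed
  have "((\<lambda>s. K*((pb+2*pc* s)/(1+pa+pb* s+pc* s^2)) + (B+2*C* s+3*D* s^2+4*E* s^3)) has_real_derivative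
     K*((2*pc*(1+pa) - pb^2)/(1+pa)^2) + 2*C) (at 0)"
    using q[of 0] by (auto intro!: derivative_eq_intros simp: field_simps power2_eq_square power3_eq_cube)
  then show ?thesis unfolding d1 by (rule DERIV_imp_deriv)
qed

lemma sq_line: "(cmod (z + of_real s * a))^2 = (cmod z)^2 + 2* s*Re(z*cnj a) + s^2*(cmod a)^2"
  by (simp only: cmod_power2) (simp add: power2_eq_square algebra_simps)

lemma T0_eq: "(1+(cmod z)^2)*(cmod b)^2 + (cmod a)^2*(cmod t)^2 + 2*(Re(z*cnj a)*Re(t*cnj b) + Re(z*cnj(\<i>*a))*Re(t*cnj(\<i>*b)))
   = (cmod b)^2 + (cmod (z*b+t*a))^2"
  by (simp only: cmod_power2) (simp add: power2_eq_square algebra_simps)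

lemma XX: "Re(z*cnj a)^2 + Re(z*cnj(\<i>*a))^2 = (cmod z)^2 * (cmod a)^2"
  by (simp only: cmod_power2) (simp add: power2_eq_square algebra_simps)

lemma d2_dir:
  fixes w z t a b :: complex
  defines "P \<equiv> (cmod z)^2" and "X \<equiv> Re(z*cnj a)" and "A \<equiv> (cmod a)^2"
    and "Q \<equiv> (cmod t)^2" and "Y \<equiv> Re(t*cnj b)" and "B \<equiv> (cmod b)^2" and "c \<equiv> 1 + (cmod w)^2"
  shows "deriv (deriv (\<lambda>s. omega_hat_pot_L w (z + of_real s * a) (t + of_real s * b))) 0
     = (2*A*(1+P) - (2*X)^2)/(1+P)^2 + 2*(c*((1+P)*B + 4*X*Y + A*Q))"
    and "deriv (deriv (\<lambda>s. tau_pot_L w (z + of_real s * a) (t + of_real s * b))) 0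
     = 2*((1+P)*B + 4*X*Y + A*Q)"
proof -
  have pos: "\<And>s::real. 1 + P + (2*X) * s + A * s^2 > 0"
  proof -
    fix s :: real
    have "1 + P + (2*X) * s + A * s^2 = 1 + (cmod (z + of_real s * a))^2"
      unfolding sq_line P_def X_def A_def by (simp add: algebra_simps)
    moreover have "(cmod (z + of_real s * a))^2 \<ge> 0" by simp
    ultimately show "1 + P + (2*X) * s + A * s^2 > 0" by linarith
  qed
  have e1: "(\<lambda>s. omega_hat_pot_L w (z + of_real s * a) (t + of_real s * b)) =
    (\<lambda>s. 1 * ln (1 + P + (2*X) * s + A * s^2) + (c*(1+P)*Q + (c*(2*(1+P)*Y+2*X*Q)) * s
       + (c*((1+P)*B + 4*X*Y + A*Q)) * s^2 + (c*(2*X*B+2*A*Y)) * s^3 + (c*A*B) * s^4))"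
  proof
    fix s :: real
    show "omega_hat_pot_L w (z + of_real s * a) (t + of_real s * b) = 
      1 * ln (1 + P + (2*X) * s + A * s^2) + (c*(1+P)*Q + (c*(2*(1+P)*Y+2*X*Q)) * s
       + (c*((1+P)*B + 4*X*Y + A*Q)) * s^2 + (c*(2*X*B+2*A*Y)) * s^3 + (c*A*B) * s^4)"
    proof -
      have h1: "(cmod (z + of_real s * a))^2 = P + 2*X* s + A* s^2"
        unfolding sq_line P_def X_def A_def by (simp add: algebra_simps)
      have h2: "(cmod (t + of_real s * b))^2 = Q + 2*Y* s + B* s^2"
        unfolding sq_line Q_def Y_def B_def by (simp add: algebra_simps)
      have h3: "(cmod (w * (t + of_real s * b)))^2 = (c - 1) * (Q + 2*Y* s + B* s^2)"
        unfolding norm_mult power_mult_distrib h2 c_def by simp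
      show ?thesis
        unfolding omega_hat_pot_L_def L_param_def phi_FS_def e_rho_def prod.case h1 h2 h3
        by (simp add: power2_eq_square power3_eq_cube algebra_simps power4_eq_xxxx)
    qed
  qed
  have e2: "(\<lambda>s. tau_pot_L w (z + of_real s * a) (t + of_real s * b)) =
    (\<lambda>s. 0 * ln (1 + P + (2*X) * s + A * s^2) + ((1+P)*Q + ((2*(1+P)*Y+2*X*Q)) * s
       + (((1+P)*B + 4*X*Y + A*Q)) * s^2 + ((2*X*B+2*A*Y)) * s^3 + (A*B) * s^4))"
  proof
    fix s :: real
    show "tau_pot_L w (z + of_real s * a) (t + of_real s * b) = 
      0 * ln (1 + P + (2*X) * s + A * s^2) + ((1+P)*Q + ((2*(1+P)*Y+2*X*Q)) * s
       + (((1+P)*B + 4*X*Y + A*Q)) * s^2 + ((2*X*B+2*A*Y)) * s^3 + (A*B) * s^4)"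
    proof -
      have h1: "(cmod (z + of_real s * a))^2 = P + 2*X* s + A* s^2"
        unfolding sq_line P_def X_def A_def by (simp add: algebra_simps)
      have h2: "(cmod (t + of_real s * b))^2 = Q + 2*Y* s + B* s^2"
        unfolding sq_line Q_def Y_def B_def by (simp add: algebra_simps)
      show ?thesis
        unfolding tau_pot_L_def L_param_def e_rho1_def prod.case h1 h2
        by (simp add: power2_eq_square power3_eq_cube algebra_simps power4_eq_xxxx)
    qed
  qed
  show "deriv (deriv (\<lambda>s. omega_hat_pot_L w (z + of_real s * a) (t + of_real s * b))) 0
     = (2*A*(1+P) - (2*X)^2)/(1+P)^2 + 2*(c*((1+P)*B + 4*X*Y + A*Q))"
    unfolding e1 by (subst d2_gen[OF pos]) simp
  show "deriv (deriv (\<lambda>s. tau_pot_L w (z + of_real s * a) (t + of_real s * b))) 0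
     = 2*((1+P)*B + 4*X*Y + A*Q)"
    unfolding e2 by (subst d2_gen[OF pos]) simp
qed

lemma levi_vals:
  fixes w z t a b :: complex
  defines "P \<equiv> (cmod z)^2" and "A \<equiv> (cmod a)^2"
    and "Q \<equiv> (cmod t)^2" and "B \<equiv> (cmod b)^2" and "c \<equiv> 1 + (cmod w)^2"
    and "T \<equiv> (cmod b)^2 + (cmod (z*b+t*a))^2"
  shows "levi (tau_pot_L w) z t a b = T"
    and "levi (omega_hat_pot_L w) z t a b = A/(1+P)^2 + c*T"
proof -
  define X where "X = Re(z*cnj a)"
  define Y where "Y = Re(t*cnj b)"
  define X' where "X' = Re(z*cnj(\<i>*a))"
  define Y' where "Y' = Re(t*cnj(\<i>*b))"
  have r: "\<And>f::complex\<Rightarrow>complex\<Rightarrow>real. (\<lambda>s::real. f (z + of_real s * \<i> * a) (t + of_real s * \<i> * b))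
     = (\<lambda>s. f (z + of_real s * (\<i>*a)) (t + of_real s * (\<i>*b)))"
    by (simp add: mult.assoc)
  have ia: "(cmod (\<i>*a))^2 = A" "(cmod (\<i>*b))^2 = B"
    unfolding A_def B_def by (simp_all add: norm_mult)
  have TT: "(1+P)*B + A*Q + 2*(X*Y + X'*Y') = T"
    unfolding P_def A_def B_def Q_def X_def Y_def X'_def Y'_def T_def by (rule T0_eq)
  have XX': "X^2 + X'^2 = P*A"
    unfolding P_def A_def X_def X'_def by (rule XX)
  have P0: "1 + P > 0" unfolding P_def by (simp add: add_pos_nonneg)
  note d1 = d2_dir[of w z a t b, folded P_def A_def Q_def B_def c_def X_def Y_def]
  note d2 = d2_dir[of w z "\<i>*a" t "\<i>*b", unfolded ia, folded P_def A_def Q_def B_def c_def X'_def Y'_def]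
  show "levi (tau_pot_L w) z t a b = T"
    unfolding levi_def r d1(2) d2(2) using TT by (simp add: algebra_simps)
  have "levi (omega_hat_pot_L w) z t a b =
     ((2*A*(1+P) - (2*X)^2)/(1+P)^2 + (2*A*(1+P) - (2*X')^2)/(1+P)^2)/4 + c*((1+P)*B + A*Q + 2*(X*Y + X'*Y'))"
    unfolding levi_def r d1(1) d2(1) by (simp add: algebra_simps add_divide_distrib)
  also have "\<dots> = (4*A*(1+P) - 4*(X^2+X'^2))/(1+P)^2/4 + c*T"
    unfolding TT by (simp add: power_mult_distrib diff_divide_distrib add_divide_distrib)
  also have "\<dots> = A/(1+P)^2 + c*T"
    proof -
      have "4*A*(1+P) - 4*(P*A) = 4*A" by (simp add: algebra_simps)
      then show ?thesis unfolding XX' by simp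
    qed
  finally show "levi (omega_hat_pot_L w) z t a b = A/(1+P)^2 + c*T" .
qed

lemma cs_step:
  fixes z t a b :: complex
  shows "(cmod a)^2 * (cmod t)^2 \<le> (1 + (cmod z)^2) * ((cmod b)^2 + (cmod (z*b+t*a))^2)"
proof -
  define u where "u = z*b+t*a"
  have "t*a = u - z*b" unfolding u_def by simp
  then have n: "cmod (t*a) \<le> cmod u + cmod z * cmod b"
    by (metis norm_mult norm_triangle_ineq4)
  have "(cmod a)^2 * (cmod t)^2 = (cmod (t*a))^2" by (simp add: norm_mult power_mult_distrib)
  also have "\<dots> \<le> (cmod u + cmod z * cmod b)^2" using n by (simp add: power_mono)
  also have "\<dots> \<le> (1 + (cmod z)^2) * ((cmod b)^2 + (cmod u)^2)"
  proof -
    have "0 \<le> (cmod z * cmod u - cmod b)^2" by simp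
    then show ?thesis by (simp add: power2_eq_square algebra_simps)
  qed
  finally show ?thesis unfolding u_def .
qed

theorem lemma3p4:
  fixes w z t a b :: complex
  assumes "case L_param w z t of (z', x1, x2) \<Rightarrow> in_Omega z' x1 x2"
  shows "levi (tau_pot_L w) z t a b \<le> levi (omega_hat_pot_L w) z t a b
       \<and> (t \<noteq> 0 \<longrightarrow>
          levi (omega_hat_pot_L w) z t a b
            \<le> 2 * (case L_param w z t of (z', x1, x2) \<Rightarrow> exp (- ln (e_rho1 z' x1 x2)))
                * levi (tau_pot_L w) z t a b)"
proof -
  define P where "P = (cmod z)^2"
  define A where "A = (cmod a)^2"
  define Q where "Q = (cmod t)^2"
  define c where "c = 1 + (cmod w)^2"
  define T where "T = (cmod b)^2 + (cmod (z*b+t*a))^2"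
  have lt: "levi (tau_pot_L w) z t a b = T" unfolding T_def by (rule levi_vals(1))
  have lo: "levi (omega_hat_pot_L w) z t a b = A/(1+P)^2 + c*T"
    unfolding T_def A_def P_def c_def by (rule levi_vals(2))
  have P0: "1 + P > 0" unfolding P_def by (simp add: add_pos_nonneg)
  have T0: "T \<ge> 0" unfolding T_def by simp
  have c1: "c \<ge> 1" unfolding c_def by simp
  have A0: "A \<ge> 0" unfolding A_def by simp
  have Q0: "Q \<ge> 0" unfolding Q_def by simp
  have om: "c * (1+P) * Q < 1"
    using assms unfolding L_param_def in_Omega_def e_rho_def P_def Q_def c_def
    by (simp add: norm_mult power_mult_distrib algebra_simps)
  have cs: "A * Q \<le> (1+P) * T"
    unfolding A_def Q_def P_def T_def by (rule cs_step)
  have first: "T \<le> A/(1+P)^2 + c*T"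
  proof -
    have "1*T \<le> c*T" using c1 T0 by (rule mult_right_mono)
    moreover have "A/(1+P)^2 \<ge> 0" using A0 by simp
    ultimately show ?thesis by linarith
  qed
  have second: "A/(1+P)^2 + c*T \<le> 2 * (1/((1+P)*Q)) * T" if "t \<noteq> 0"
  proof -
    have Qp: "Q > 0" unfolding Q_def using that by simp
    have D: "(1+P)*Q > 0" using Qp P0 by simp
    have s1: "c*T \<le> T/((1+P)*Q)"
    proof -
      have "c*T*((1+P)*Q) \<le> T" using om T0
        by (metis less_eq_real_def mult.assoc mult.commute mult_left_mono mult.right_neutral)
      then show ?thesis using D by (simp add: pos_le_divide_eq)
    qed
    have s2: "A/(1+P)^2 \<le> T/((1+P)*Q)"
    proof -
      have "A/(1+P)^2 = (A*Q)/((1+P)*((1+P)*Q))" using Qp P0 by (simp add: power2_eq_square)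
      also have "\<dots> \<le> ((1+P)*T)/((1+P)*((1+P)*Q))"
        using cs D P0 by (intro divide_right_mono) auto
      also have "\<dots> = T/((1+P)*Q)" using P0 by simp
      finally show ?thesis .
    qed
    show ?thesis using s1 s2 by simp
  qed
  have ex: "t \<noteq> 0 \<Longrightarrow> (case L_param w z t of (z', x1, x2) \<Rightarrow> exp (- ln (e_rho1 z' x1 x2))) = 1/((1+P)*Q)"
  proof -
    assume "t \<noteq> 0"
    then have "(1+P)*Q > 0" using P0 unfolding Q_def by simp
    then show ?thesis unfolding L_param_def e_rho1_def P_def Q_def
      by (simp add: exp_minus divide_inverse)
  qed
  show ?thesis using first second ex unfolding lt lo by auto
qed

end
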